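(* Let $X$ be a real locally convex Hausdorff topological vector space with topological dual $X^*$. A nonempty subset $D\subset X$ is a convex polyhedron in $X$ if and only if there exist closed linear subspaces $X_0$, $X_1$ of $X$ and a convex polyhedron $D_1$ of the space $X_1$ such that $$X=X_0+X_1,\qquad X_0\cap X_1=\{0\},\qquad \dim X_1<+\infty,$$ and $$D=D_1+X_0.$$
   Context: For $x^*\in X^*$ and $x\in X$, $\langle x^*,x\rangle$ denotes the value of $x^*$ at $x$. A subset $C$ of a real locally convex Hausdorff topological vector space $Z$ is called a convex polyhedron (polyhedral convex set) of $Z$ if there exist finitely many $z_i^*\in Z^*$ and $\alpha_i\in\mathbb{R}$, $i=1,\dots,p$ ($p\ge 0$; the intersection of an empty family is $Z$), such that $C=\{z\in Z\mid \langle z_i^*,z\rangle\le\alpha_i,\ i=1,\dots,p\}$. Here $X_1$ is regarded with the topology induced from $X$, and $D_1$ being a convex polyhedron of $X_1$ means this definition with $Z=X_1$. *)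

theory Defs
  imports "HOL-Analysis.Analysis"
begin

definition lc_hausdorff_tvs :: "'a::real_vector topology \<Rightarrow> bool" where
  "lc_hausdorff_tvs T \<longleftrightarrow>
     topspace T = UNIV \<and>
     continuous_map (prod_topology T T) T (\<lambda>(x, y). x + y) \<and>
     continuous_map (prod_topology euclideanreal T) T (\<lambda>(c, x). c *\<^sub>R x) \<and>
     Hausdorff_space T \<and>
     (\<forall>U. openin T U \<and> 0 \<in> U \<longrightarrow> (\<exists>V. openin T V \<and> convex V \<and> 0 \<in> V \<and> V \<subseteq> U))"

definition linear_functional_on :: "'a::real_vector set \<Rightarrow> ('a \<Rightarrow> real) \<Rightarrow> bool" where
  "linear_functional_on Z f \<longleftrightarrow>
     (\<forall>x\<in>Z. \<forall>y\<in>Z. f (x + y) = f x + f y) \<and> (\<forall>c. \<forall>x\<in>Z. f (c *\<^sub>R x) = c * f x)"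

definition dual_on :: "'a::real_vector topology \<Rightarrow> 'a set \<Rightarrow> ('a \<Rightarrow> real) set" where
  "dual_on T Z = {f. linear_functional_on Z f \<and> continuous_map (subtopology T Z) euclideanreal f}"

definition convex_polyhedron_in :: "'a::real_vector topology \<Rightarrow> 'a set \<Rightarrow> 'a set \<Rightarrow> bool" where
  "convex_polyhedron_in T Z C \<longleftrightarrow>
     (\<exists>F :: (('a \<Rightarrow> real) \<times> real) set. finite F \<and> (\<forall>(f, \<alpha>)\<in>F. f \<in> dual_on T Z) \<and>
        C = {z \<in> Z. \<forall>(f, \<alpha>)\<in>F. f z \<le> \<alpha>})"

abbreviation convex_polyhedron :: "'a::real_vector topology \<Rightarrow> 'a set \<Rightarrow> bool" where
  "convex_polyhedron T C \<equiv> convex_polyhedron_in T UNIV C"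

end

theory Submission
  imports Defs
begin

lemma tvs_topspace: "lc_hausdorff_tvs T \<Longrightarrow> topspace T = UNIV"
  by (simp add: lc_hausdorff_tvs_def)

lemma tvs_add:
  assumes T: "lc_hausdorff_tvs T" and f: "continuous_map X T f" and g: "continuous_map X T g"
  shows "continuous_map X T (\<lambda>x. f x + g x)"
proof -
  have "continuous_map (prod_topology T T) T (\<lambda>(x, y). x + y)"
    using T by (simp add: lc_hausdorff_tvs_def)
  from continuous_map_compose[OF continuous_map_pairedI[OF f g] this]
  show ?thesis by (simp add: o_def)
qed

lemma tvs_scale:
  assumes T: "lc_hausdorff_tvs T" and f: "continuous_map X euclideanreal a" and g: "continuous_map X T g"
  shows "continuous_map X T (\<lambda>x. a x *\<^sub>R g x)"
proof -
  have "continuous_map (prod_topology euclideanreal T) T (\<lambda>(c, x). c *\<^sub>R x)"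
    using T by (simp add: lc_hausdorff_tvs_def)
  from continuous_map_compose[OF continuous_map_pairedI[OF f g] this]
  show ?thesis by (simp add: o_def)
qed

lemma tvs_const:
  assumes T: "lc_hausdorff_tvs T" shows "continuous_map X T (\<lambda>x. c)"
  using T by (simp add: lc_hausdorff_tvs_def)

lemma tvs_sum:
  assumes T: "lc_hausdorff_tvs T" and "finite I" and "\<And>i. i \<in> I \<Longrightarrow> continuous_map X T (f i)"
  shows "continuous_map X T (\<lambda>x. \<Sum>i\<in>I. f i x)"
  using assms(2,3)
proof (induction I rule: finite_induct)
  case empty
  then show ?case using tvs_const[OF T] by simp
next
  case (insert i I)
  then show ?case using tvs_add[OF T, of X "f i" "\<lambda>x. \<Sum>i\<in>I. f i x"] by simp
qed

lemma tvs_affine: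
  assumes T: "lc_hausdorff_tvs T"
  shows "continuous_map T T (\<lambda>y. c *\<^sub>R (y - x))"
proof -
  have "continuous_map T T (\<lambda>y. c *\<^sub>R (y + (-1) *\<^sub>R x))"
    by (intro tvs_scale[OF T] tvs_add[OF T] tvs_const[OF T] continuous_map_const[THEN iffD2]) (auto simp: continuous_map_id[unfolded id_def])
  then show ?thesis by simp
qed


lemma tvs_functional_cont:
  assumes T: "lc_hausdorff_tvs T" and V: "openin T V" "0 \<in> V"
    and bnd: "\<And>x. x \<in> V \<Longrightarrow> \<bar>\<phi> x\<bar> < 1" and lin: "linear \<phi>"
  shows "continuous_map T euclideanreal \<phi>"
  unfolding continuous_map
proof (intro conjI allI impI)
  show "\<phi> ` topspace T \<subseteq> topspace euclideanreal" by simp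
  fix U :: "real set" assume "openin euclideanreal U"
  then have oU: "open U" by simp
  show "openin T {x \<in> topspace T. \<phi> x \<in> U}"
  proof (subst openin_subopen, intro ballI)
    fix x assume "x \<in> {x \<in> topspace T. \<phi> x \<in> U}"
    then have "\<phi> x \<in> U" by simp
    then obtain e where e: "e > 0" "ball (\<phi> x) e \<subseteq> U" using oU open_contains_ball by blast
    define N where "N = {y \<in> topspace T. (1/e) *\<^sub>R (y - x) \<in> V}"
    have "openin T N" unfolding N_def
      by (rule openin_continuous_map_preimage[OF tvs_affine[OF T] V(1)])
    moreover have "x \<in> N" using V(2) tvs_topspace[OF T] by (simp add: N_def)
    moreover have "N \<subseteq> {x \<in> topspace T. \<phi> x \<in> U}"
    proof
      fix y assume "y \<in> N"
      then have "\<bar>\<phi> ((1/e) *\<^sub>R (y - x))\<bar> < 1" and ys: "y \<in> topspace T" using bnd by (auto simp: N_def)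
      then have "\<bar>(1/e) * (\<phi> y - \<phi> x)\<bar> < 1"
        using lin by (simp add: linear_scale linear_diff diff_divide_distrib)
      then have "\<bar>\<phi> y - \<phi> x\<bar> < e" using e(1) by (simp add: abs_mult divide_simps)
      then have "\<phi> y \<in> ball (\<phi> x) e" by (simp add: dist_real_def abs_minus_commute)
      then show "y \<in> {x \<in> topspace T. \<phi> x \<in> U}" using e(2) ys by auto
    qed
    ultimately show "\<exists>T'. openin T T' \<and> x \<in> T' \<and> T' \<subseteq> {x \<in> topspace T. \<phi> x \<in> U}" by blast
  qed
qed


lemma tvs_nbhd:
  assumes T: "lc_hausdorff_tvs T" and X0: "closedin T X0" and k: "k \<notin> X0"
  shows "\<exists>W. openin T W \<and> convex W \<and> 0 \<in> W \<and> (\<forall>w1\<in>W. \<forall>w2\<in>W. k + w1 - w2 \<notin> X0)"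
proof -
  have ts: "topspace T = UNIV" using T by (simp add: lc_hausdorff_tvs_def)
  define h where "h = (\<lambda>z::'a\<times>'a. k + (fst z + (-1) *\<^sub>R snd z))"
  have hc: "continuous_map (prod_topology T T) T h"
    unfolding h_def
    by (intro tvs_add[OF T] tvs_scale[OF T] tvs_const[OF T] continuous_map_fst continuous_map_snd
        continuous_map_const[THEN iffD2]) simp_all
  have oO: "openin T (topspace T - X0)" using X0 by auto
  have op: "openin (prod_topology T T) {z \<in> topspace (prod_topology T T). h z \<in> topspace T - X0}"
    by (rule openin_continuous_map_preimage[OF hc oO])
  have "(0,0) \<in> {z \<in> topspace (prod_topology T T). h z \<in> topspace T - X0}"
    using k ts by (simp add: h_def)
  then obtain U V where UV: "openin T U" "openin T V" "0 \<in> U" "0 \<in> V"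
    "U \<times> V \<subseteq> {z \<in> topspace (prod_topology T T). h z \<in> topspace T - X0}"
    using op unfolding openin_prod_topology_alt by blast
  have "openin T (U \<inter> V)" "0 \<in> U \<inter> V" using UV by auto
  then obtain W where W: "openin T W" "convex W" "0 \<in> W" "W \<subseteq> U \<inter> V"
    using T unfolding lc_hausdorff_tvs_def by meson
  have "\<forall>w1\<in>W. \<forall>w2\<in>W. k + w1 - w2 \<notin> X0"
  proof (intro ballI)
    fix w1 w2 assume "w1 \<in> W" "w2 \<in> W"
    then have "(w1, w2) \<in> U \<times> V" using W(4) by auto
    then have "h (w1, w2) \<notin> X0" using UV(5) by blast
    then show "k + w1 - w2 \<notin> X0" by (simp add: h_def algebra_simps)
  qed
  then show ?thesis using W by blast
qed


lemma tvs_projection: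
  fixes T :: "'a::real_vector topology"
  assumes T: "lc_hausdorff_tvs T" and X0: "subspace X0" "closedin T X0"
    and B: "finite B" "independent B" and int: "span B \<inter> X0 = {0}"
    and sm: "\<forall>x. \<exists>x0\<in>X0. \<exists>x1\<in>span B. x = x0 + x1"
  shows "\<exists>P. continuous_map T T P \<and> (\<forall>x. P x \<in> span B \<and> x - P x \<in> X0)"
proof -
  have ts: "topspace T = UNIV" using T by (simp add: lc_hausdorff_tvs_def)
  define E where "E = (\<lambda>c::'a\<Rightarrow>real. \<Sum>b\<in>B. c b *\<^sub>R b)"
  define PT where "PT = product_topology (\<lambda>_::'a. euclideanreal) UNIV"
  have tsPT: "topspace PT = UNIV" by (simp add: PT_def)
  have Ec: "continuous_map PT T E"
    unfolding E_def PT_def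
    by (intro tvs_sum[OF T] B(1) tvs_scale[OF T] continuous_map_product_projection tvs_const[OF T]) simp
  have Espan: "E c \<in> span B" for c
    unfolding E_def by (intro span_sum span_scale span_base)
  have Eadd: "E (\<lambda>i. c i + d i) = E c + E d" for c d
    by (simp add: E_def scaleR_add_left sum.distrib)
  have Escale: "E (\<lambda>i. a * c i) = a *\<^sub>R E c" for a c
    by (simp add: E_def scaleR_sum_right)
  have Ediff: "E (\<lambda>i. c i - d i) = E c - E d" for c d
    by (simp add: E_def scaleR_diff_left sum_subtractf)
  have Ezero: "E c = 0 \<Longrightarrow> b \<in> B \<Longrightarrow> c b = 0" for c b
    using B dependent_finite[OF B(1)] unfolding E_def by auto
  define Box where "Box = PiE UNIV (\<lambda>i::'a. if i \<in> B then {-1..1::real} else {0})"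
  define S where "S = {c. \<exists>b\<in>B. \<bar>c b\<bar> = 1} \<inter> Box"
  have cBox: "compactin PT Box"
    unfolding PT_def Box_def compactin_PiE by auto
  have clS1: "closedin PT {c. \<exists>b\<in>B. \<bar>c b\<bar> = 1}"
  proof -
    have "{c. \<exists>b\<in>B. \<bar>c b\<bar> = 1} = \<Union>((\<lambda>b. {c \<in> topspace PT. c b \<in> {-1,1}}) ` B)"
      using tsPT by (auto simp: abs_eq_iff) (metis abs_1 abs_minus_cancel)+
    moreover have "closedin PT {c \<in> topspace PT. c b \<in> {-1,1}}" for b
      by (rule closedin_continuous_map_preimage[where Y=euclideanreal]) (auto simp: PT_def intro: continuous_map_product_projection[of b UNIV "\<lambda>_. euclideanreal", simplified])
    ultimately show ?thesis using B(1) by (auto intro!: closedin_Union)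
  qed
  have cS: "compactin PT S" unfolding S_def by (rule closed_Int_compactin[OF clS1 cBox])
  define K where "K = E ` S"
  have cK: "compactin T K" unfolding K_def by (rule image_compactin[OF cS Ec])
  have Knot: "k \<notin> X0" if "k \<in> K" for k
  proof
    assume kX: "k \<in> X0"
    obtain c b where c: "c \<in> S" "k = E c" "b \<in> B" "\<bar>c b\<bar> = 1"
      using \<open>k \<in> K\<close> by (auto simp: K_def S_def)
    then have "k = 0" using int kX Espan by blast
    then show False using Ezero c by fastforce
  qed
  have "\<forall>k\<in>K. \<exists>W. openin T W \<and> convex W \<and> 0 \<in> W \<and> (\<forall>w1\<in>W. \<forall>w2\<in>W. k + w1 - w2 \<notin> X0)"
    using tvs_nbhd[OF T X0(2)] Knot by blast
  then obtain Wf where Wf: "\<And>k. k \<in> K \<Longrightarrow> openin T (Wf k) \<and> convex (Wf k) \<and> 0 \<in> Wf k \<and>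
      (\<forall>w1\<in>Wf k. \<forall>w2\<in>Wf k. k + w1 - w2 \<notin> X0)"
    by metis
  define cov where "cov = (\<lambda>k. {x \<in> topspace T. 1 *\<^sub>R (x - k) \<in> Wf k})"
  have "\<forall>U \<in> cov ` K. openin T U"
    using Wf openin_continuous_map_preimage[OF tvs_affine[OF T]] unfolding cov_def by blast
  moreover have "K \<subseteq> \<Union>(cov ` K)" using Wf ts by (auto simp: cov_def)
  ultimately obtain F where F: "finite F" "F \<subseteq> cov ` K" "K \<subseteq> \<Union>F"
    using cK unfolding compactin_def by meson
  then obtain K' where K': "K' \<subseteq> K" "finite K'" "F = cov ` K'"
    using finite_subset_image by metis
  define V where "V = (\<Inter>k\<in>K'. Wf k) \<inter> topspace T"
  have oV: "openin T V" unfolding V_def using K' Wf by (intro openin_INT) auto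
  have cV: "convex V" unfolding V_def ts using K' Wf by (auto intro!: convex_INT)
  have zV: "0 \<in> V" unfolding V_def ts using K' Wf by auto
  have avoid: "E c \<noteq> x + x0" if "x \<in> V" "x0 \<in> X0" "c \<in> S" for x x0 c
  proof
    assume eq: "E c = x + x0"
    have "E c \<in> K" using that by (simp add: K_def)
    then obtain k where k: "k \<in> K'" "E c - k \<in> Wf k" using F K' by (auto simp: cov_def)
    have "x \<in> Wf k" using that k by (simp add: V_def)
    then have "k + (E c - k) - x \<notin> X0" using Wf k K' by blast
    then show False using eq that by simp
  qed
  have ex: "\<exists>c. (\<forall>i. i \<notin> B \<longrightarrow> c i = 0) \<and> x - E c \<in> X0" for x
  proof -
    obtain x0 x1 where x: "x0 \<in> X0" "x1 \<in> span B" "x = x0 + x1" using sm by blast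
    then obtain u where u: "x1 = (\<Sum>v\<in>B. u v *\<^sub>R v)" using span_finite[OF B(1)] by auto
    define c where "c = (\<lambda>i. if i \<in> B then u i else 0)"
    have "E c = x1" unfolding u E_def c_def by (rule sum.cong) auto
    then show ?thesis using x by (intro exI[of _ c]) (auto simp: c_def)
  qed
  have uniq: "c = d" if "\<forall>i. i \<notin> B \<longrightarrow> c i = 0" "x - E c \<in> X0"
     "\<forall>i. i \<notin> B \<longrightarrow> d i = 0" "x - E d \<in> X0" for x c d
  proof
    fix i
    have "(x - E d) - (x - E c) \<in> X0" using that X0(1) subspace_diff by blast
    then have "E (\<lambda>i. c i - d i) \<in> X0" by (simp add: Ediff)
    then have "E (\<lambda>i. c i - d i) = 0" using int Espan by blast
    then show "c i = d i" using Ezero[of "\<lambda>i. c i - d i" i] that by (cases "i \<in> B") auto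
  qed
  define coord where "coord x = (SOME c. (\<forall>i. i \<notin> B \<longrightarrow> c i = 0) \<and> x - E c \<in> X0)" for x
  have co: "(\<forall>i. i \<notin> B \<longrightarrow> coord x i = 0) \<and> x - E (coord x) \<in> X0" for x
    unfolding coord_def by (rule someI_ex[OF ex])
  have co_add: "coord (x + y) = (\<lambda>i. coord x i + coord y i)" for x y
  proof (rule uniq[OF conjunct1[OF co] conjunct2[OF co]])
    show "\<forall>i. i \<notin> B \<longrightarrow> coord x i + coord y i = 0" using co by simp
    have "(x - E (coord x)) + (y - E (coord y)) \<in> X0" using co X0(1) subspace_add by blast
    then show "x + y - E (\<lambda>i. coord x i + coord y i) \<in> X0" by (simp add: Eadd algebra_simps)
  qed
  have co_scale: "coord (a *\<^sub>R x) = (\<lambda>i. a * coord x i)" for a x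
  proof (rule uniq[OF conjunct1[OF co] conjunct2[OF co]])
    show "\<forall>i. i \<notin> B \<longrightarrow> a * coord x i = 0" using co by simp
    have "a *\<^sub>R (x - E (coord x)) \<in> X0" using co X0(1) subspace_scale by blast
    then show "a *\<^sub>R x - E (\<lambda>i. a * coord x i) \<in> X0" by (simp add: Escale algebra_simps)
  qed
  have bound: "\<bar>coord x b\<bar> < 1" if "x \<in> V" "b \<in> B" for x b
  proof (rule ccontr)
    assume "\<not> \<bar>coord x b\<bar> < 1"
    define c where "c = coord x"
    define m where "m = Max ((\<lambda>b. \<bar>c b\<bar>) ` B)"
    have mge: "\<bar>c b'\<bar> \<le> m" if "b' \<in> B" for b' using B(1) that by (auto simp: m_def)
    have m1: "m \<ge> 1" using mge[OF \<open>b \<in> B\<close>] \<open>\<not> \<bar>coord x b\<bar> < 1\<close> by (simp add: c_def)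
    obtain b0 where b0: "b0 \<in> B" "\<bar>c b0\<bar> = m"
    proof -
      have "m \<in> (\<lambda>b. \<bar>c b\<bar>) ` B" unfolding m_def using B(1) \<open>b \<in> B\<close> by (intro Max_in) auto
      then show ?thesis using that by auto
    qed
    define c' where "c' = (\<lambda>i. (1/m) * c i)"
    have "c' \<in> S"
    proof -
      have "\<bar>c' b0\<bar> = 1" using b0 m1 by (simp add: c'_def abs_mult)
      moreover have "c' i \<in> (if i \<in> B then {-1..1} else {0})" for i
      proof (cases "i \<in> B")
        case True
        then have "\<bar>c i\<bar> \<le> m" by (rule mge)
        then have "\<bar>c' i\<bar> \<le> 1" using m1 by (simp add: c'_def abs_mult divide_simps)
        then show ?thesis using True by (simp add: abs_le_iff)
      next
        case False
        then show ?thesis using co by (simp add: c'_def c_def)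
      qed
      ultimately show ?thesis using b0 by (auto simp: S_def Box_def PiE_iff)
    qed
    moreover have "(1/m) *\<^sub>R x \<in> V"
    proof -
      have "(1/m) *\<^sub>R x + (1 - 1/m) *\<^sub>R 0 \<in> V"
        using cV \<open>x \<in> V\<close> zV m1 by (intro convexD) auto
      then show ?thesis by simp
    qed
    moreover have "(1/m) *\<^sub>R (E c - x) \<in> X0"
    proof -
      have "- (x - E c) \<in> X0" using co[of x] X0(1) subspace_neg by (metis c_def)
      then show ?thesis using X0(1) subspace_scale by (metis minus_diff_eq)
    qed
    moreover have "E c' = (1/m) *\<^sub>R x + (1/m) *\<^sub>R (E c - x)"
      using Escale[of "1/m" c] by (simp add: c'_def algebra_simps)
    ultimately show False using avoid by blast
  qed
  have phic: "continuous_map T euclideanreal (\<lambda>x. coord x b)" for b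
  proof (cases "b \<in> B")
    case True
    show ?thesis
    proof (rule tvs_functional_cont[OF T oV zV])
      show "\<And>x. x \<in> V \<Longrightarrow> \<bar>coord x b\<bar> < 1" using bound True by blast
      show "linear (\<lambda>x. coord x b)" by (rule linearI) (simp_all add: co_add co_scale)
    qed
  next
    case False
    then show ?thesis using co by simp
  qed
  have coc: "continuous_map T PT coord"
    unfolding PT_def continuous_map_componentwise_UNIV using phic by blast
  show ?thesis
  proof (intro exI[of _ "\<lambda>x. E (coord x)"] conjI allI)
    show "continuous_map T T (\<lambda>x. E (coord x))"
      using continuous_map_compose[OF coc Ec] by (simp add: o_def)
    show "E (coord x) \<in> span B" for x by (rule Espan)
    show "x - E (coord x) \<in> X0" for x using co by blast
  qed
qed


lemma complement_exists:
  fixes G :: "('a::real_vector \<Rightarrow> real) set"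
  assumes "finite G" "\<And>f. f \<in> G \<Longrightarrow> linear f"
  shows "\<exists>B. finite B \<and> span B \<inter> {x. \<forall>f\<in>G. f x = 0} = {0} \<and>
     (\<forall>x. \<exists>x0\<in>{x. \<forall>f\<in>G. f x = 0}. \<exists>x1\<in>span B. x = x0 + x1)"
  using assms
proof (induction G rule: finite_induct)
  case empty
  show ?case by (intro exI[of _ "{}"]) auto
next
  case (insert g G)
  define Z where "Z = {x. \<forall>f\<in>G. f x = 0}"
  obtain B where B: "finite B" "span B \<inter> Z = {0}" "\<forall>x. \<exists>x0\<in>Z. \<exists>x1\<in>span B. x = x0 + x1"
    using insert unfolding Z_def by auto
  have lg: "linear g" using insert by simp
  have lG: "\<And>f. f \<in> G \<Longrightarrow> linear f" using insert by simp
  have Zeq: "{x. \<forall>f\<in>insert g G. f x = 0} = {x \<in> Z. g x = 0}" by (auto simp: Z_def)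
  show ?case
  proof (cases "\<exists>b\<in>Z. g b \<noteq> 0")
    case False
    then show ?thesis using B unfolding Zeq by (intro exI[of _ B]) fastforce
  next
    case True
    then obtain b0 where b0: "b0 \<in> Z" "g b0 \<noteq> 0" by blast
    define b where "b = (1 / g b0) *\<^sub>R b0"
    have bZ: "b \<in> Z" using b0 lG by (auto simp: Z_def b_def linear_scale)
    have gb: "g b = 1" using b0 lg by (simp add: b_def linear_scale)
    have Zsub: "x \<in> Z \<Longrightarrow> y \<in> Z \<Longrightarrow> x - y \<in> Z" for x y using lG by (auto simp: Z_def linear_diff)
    have Zadd: "x \<in> Z \<Longrightarrow> y \<in> Z \<Longrightarrow> x + y \<in> Z" for x y using lG by (auto simp: Z_def linear_add)
    have Zsc: "x \<in> Z \<Longrightarrow> c *\<^sub>R x \<in> Z" for x c using lG by (auto simp: Z_def linear_scale)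
    show ?thesis
    proof (intro exI[of _ "insert b B"] conjI allI)
      show "finite (insert b B)" using B by simp
      show "span (insert b B) \<inter> {x. \<forall>f\<in>insert g G. f x = 0} = {0}"
      proof
        show "{0} \<subseteq> span (insert b B) \<inter> {x. \<forall>f\<in>insert g G. f x = 0}"
          using lg lG by (auto simp: span_zero linear_0)
        show "span (insert b B) \<inter> {x. \<forall>f\<in>insert g G. f x = 0} \<subseteq> {0}"
        proof
          fix v assume v: "v \<in> span (insert b B) \<inter> {x. \<forall>f\<in>insert g G. f x = 0}"
          then obtain t u where tu: "u \<in> span B" "v = u + t *\<^sub>R b"
            using span_breakdown_eq[of v b B] by (metis (no_types, lifting) IntD1 diff_add_cancel)
          have vZ: "v \<in> Z" "g v = 0" using v unfolding Zeq by auto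
          have "u \<in> Z" using Zsub[OF vZ(1) Zsc[OF bZ, of t]] tu by simp
          then have u0: "u = 0" using B(2) tu by blast
          then have "t = 0" using vZ(2) tu gb lg by (simp add: linear_scale)
          then show "v \<in> {0}" using u0 tu by simp
        qed
      qed
      fix x
      obtain x0 x1 where x: "x0 \<in> Z" "x1 \<in> span B" "x = x0 + x1" using B(3) by blast
      define y0 where "y0 = x0 - g x0 *\<^sub>R b"
      have "y0 \<in> Z" using Zsub[OF x(1) Zsc[OF bZ]] by (simp add: y0_def)
      moreover have "g y0 = 0" using lg gb by (simp add: y0_def linear_diff linear_scale)
      moreover have "x1 + g x0 *\<^sub>R b \<in> span (insert b B)"
        using x(2) by (meson span_add span_base span_mono span_scale insertI1 subset_insertI subsetD)
      moreover have "x = y0 + (x1 + g x0 *\<^sub>R b)" using x by (simp add: y0_def)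
      ultimately show "\<exists>x0\<in>{x. \<forall>f\<in>insert g G. f x = 0}. \<exists>x1\<in>span (insert b B). x = x0 + x1"
        unfolding Zeq by blast
    qed
  qed
qed


lemma tvs_projection':
  fixes T :: "'a::real_vector topology"
  assumes T: "lc_hausdorff_tvs T" and X0: "subspace X0" "closedin T X0"
    and B: "finite B" and int: "span B \<inter> X0 = {0}"
    and sm: "\<forall>x. \<exists>x0\<in>X0. \<exists>x1\<in>span B. x = x0 + x1"
  shows "\<exists>P. continuous_map T T P \<and> (\<forall>x. P x \<in> span B \<and> x - P x \<in> X0)"
proof -
  obtain B' where B': "B' \<subseteq> B" "independent B'" "B \<subseteq> span B'"
    using maximal_independent_subset[of B] by blast
  have "span B' = span B"
    using B' by (meson span_minimal subspace_span span_mono subset_antisym)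
  then show ?thesis using tvs_projection[OF T X0 finite_subset[OF B'(1) B] B'(2)] int sm by simp
qed

lemma lin_of_lfo: "linear_functional_on UNIV f \<Longrightarrow> linear f"
  unfolding linear_functional_on_def by (intro linearI) auto

theorem proposition2p6:
  fixes T :: "'a::real_vector topology" and D :: "'a set"
  assumes "lc_hausdorff_tvs T"
    and "D \<noteq> {}"
  shows "convex_polyhedron T D \<longleftrightarrow>
    (\<exists>X0 X1 D1.
       subspace X0 \<and> closedin T X0 \<and> subspace X1 \<and> closedin T X1 \<and>
       convex_polyhedron_in T X1 D1 \<and>
       (\<forall>x. \<exists>x0\<in>X0. \<exists>x1\<in>X1. x = x0 + x1) \<and>
       X0 \<inter> X1 = {0} \<and>
       (\<exists>B. finite B \<and> X1 = span B) \<and>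
       D = {d1 + x0 | d1 x0. d1 \<in> D1 \<and> x0 \<in> X0})"
proof -
  note T = assms(1)
  have ts: "topspace T = UNIV" using T by (simp add: lc_hausdorff_tvs_def)
  show ?thesis
  proof
    assume "convex_polyhedron T D"
    then obtain F where F: "finite F" "\<forall>(f, \<alpha>)\<in>F. f \<in> dual_on T UNIV"
      "D = {z \<in> UNIV. \<forall>(f, \<alpha>)\<in>F. f z \<le> \<alpha>}"
      unfolding convex_polyhedron_in_def by blast
    have linF: "linear f" if "f \<in> fst ` F" for f
      using that F(2) by (force simp: dual_on_def intro: lin_of_lfo)
    have contF: "continuous_map T euclideanreal f" if "f \<in> fst ` F" for f
      using that F(2) by (auto simp: dual_on_def)
    define X0 where "X0 = {x. \<forall>f\<in>fst ` F. f x = 0}"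
    obtain B where B: "finite B" "span B \<inter> X0 = {0}" "\<forall>x. \<exists>x0\<in>X0. \<exists>x1\<in>span B. x = x0 + x1"
      using complement_exists[of "fst ` F"] F(1) linF unfolding X0_def by blast
    have sX0: "subspace X0"
      unfolding subspace_def X0_def using linF by (auto simp: linear_0 linear_add linear_scale)
    have cX0: "closedin T X0"
    proof -
      have "X0 = \<Inter>(insert (topspace T) ((\<lambda>f. {x \<in> topspace T. f x \<in> {0}}) ` fst ` F))"
        unfolding X0_def ts by auto
      moreover have "closedin T (\<Inter>(insert (topspace T) ((\<lambda>f. {x \<in> topspace T. f x \<in> {0}}) ` fst ` F)))"
      proof (rule closedin_Inter)
        fix C assume "C \<in> insert (topspace T) ((\<lambda>f. {x \<in> topspace T. f x \<in> {0}}) ` fst ` F)"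
        then show "closedin T C"
        proof
          assume "C \<in> (\<lambda>f. {x \<in> topspace T. f x \<in> {0}}) ` fst ` F"
          then obtain f where "f \<in> fst ` F" "C = {x \<in> topspace T. f x \<in> {0}}" by blast
          then show ?thesis using closedin_continuous_map_preimage[OF contF[of f], of "{0}"] by simp
        qed simp
      qed simp
      ultimately show ?thesis by simp
    qed
    obtain P where P: "continuous_map T T P" "\<forall>x. P x \<in> span B \<and> x - P x \<in> X0"
      using tvs_projection'[OF T sX0 cX0 B] by blast
    have "span B = {x \<in> topspace T. P x = x}"
    proof (intro set_eqI iffI)
      fix x assume x: "x \<in> span B"
      then have "x - P x \<in> span B" using P by (simp add: span_diff)
      then have "x - P x = 0" using P B(2) by blast
      then show "x \<in> {x \<in> topspace T. P x = x}" using ts by simp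
    next
      fix x assume "x \<in> {x \<in> topspace T. P x = x}"
      then show "x \<in> span B" using P by (metis (mono_tags, lifting) mem_Collect_eq)
    qed
    moreover have "closedin T {x \<in> topspace T. P x = x}"
      using closedin_continuous_maps_eq[OF _ P(1) continuous_map_id[unfolded id_def]] T
      by (simp add: lc_hausdorff_tvs_def)
    ultimately have cX1: "closedin T (span B)" by simp
    define D1 where "D1 = {z \<in> span B. \<forall>(f, \<alpha>)\<in>F. f z \<le> \<alpha>}"
    have pD1: "convex_polyhedron_in T (span B) D1"
      unfolding convex_polyhedron_in_def
    proof (intro exI[of _ F] conjI)
      show "finite F" by (rule F(1))
      show "D1 = {z \<in> span B. \<forall>(f, \<alpha>)\<in>F. f z \<le> \<alpha>}" by (rule D1_def)
      show "\<forall>(f, \<alpha>)\<in>F. f \<in> dual_on T (span B)"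
        using F(2) by (auto simp: dual_on_def linear_functional_on_def intro: continuous_map_from_subtopology)
    qed
    have D: "D = {d1 + x0 | d1 x0. d1 \<in> D1 \<and> x0 \<in> X0}"
    proof (intro set_eqI iffI)
      fix x assume "x \<in> D"
      obtain x0 x1 where x: "x0 \<in> X0" "x1 \<in> span B" "x = x0 + x1" using B(3) by blast
      have "x1 \<in> D1"
      proof -
        have "f x1 \<le> \<alpha>" if "(f, \<alpha>) \<in> F" for f \<alpha>
        proof -
          have "f x \<le> \<alpha>" using \<open>x \<in> D\<close> that F(3) by auto
          moreover have "f x0 = 0" using x(1) that by (force simp: X0_def)
          moreover have "f x = f x0 + f x1" using linF[of f] that x(3) by (force simp: linear_add)
          ultimately show ?thesis by simp
        qed
        then show ?thesis using x(2) by (auto simp: D1_def)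
      qed
      then show "x \<in> {d1 + x0 | d1 x0. d1 \<in> D1 \<and> x0 \<in> X0}" using x add.commute by blast
    next
      fix x assume "x \<in> {d1 + x0 | d1 x0. d1 \<in> D1 \<and> x0 \<in> X0}"
      then obtain d1 x0 where d: "d1 \<in> D1" "x0 \<in> X0" "x = d1 + x0" by blast
      have "f x \<le> \<alpha>" if "(f, \<alpha>) \<in> F" for f \<alpha>
      proof -
        have "f d1 \<le> \<alpha>" using d(1) that by (auto simp: D1_def)
        moreover have "f x0 = 0" using d(2) that by (force simp: X0_def)
        moreover have "f x = f d1 + f x0" using linF[of f] that d(3) by (force simp: linear_add)
        ultimately show ?thesis by simp
      qed
      then show "x \<in> D" using F(3) by auto
    qed
    show "\<exists>X0 X1 D1.
       subspace X0 \<and> closedin T X0 \<and> subspace X1 \<and> closedin T X1 \<and>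
       convex_polyhedron_in T X1 D1 \<and>
       (\<forall>x. \<exists>x0\<in>X0. \<exists>x1\<in>X1. x = x0 + x1) \<and>
       X0 \<inter> X1 = {0} \<and>
       (\<exists>B. finite B \<and> X1 = span B) \<and>
       D = {d1 + x0 | d1 x0. d1 \<in> D1 \<and> x0 \<in> X0}"
      using sX0 cX0 subspace_span cX1 pD1 B D by blast
  next
    assume "\<exists>X0 X1 D1.
       subspace X0 \<and> closedin T X0 \<and> subspace X1 \<and> closedin T X1 \<and>
       convex_polyhedron_in T X1 D1 \<and>
       (\<forall>x. \<exists>x0\<in>X0. \<exists>x1\<in>X1. x = x0 + x1) \<and>
       X0 \<inter> X1 = {0} \<and>
       (\<exists>B. finite B \<and> X1 = span B) \<and>
       D = {d1 + x0 | d1 x0. d1 \<in> D1 \<and> x0 \<in> X0}"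
    then obtain X0 X1 D1 B where H: "subspace X0" "closedin T X0" "subspace X1"
      "convex_polyhedron_in T X1 D1" "\<forall>x. \<exists>x0\<in>X0. \<exists>x1\<in>X1. x = x0 + x1"
      "X0 \<inter> X1 = {0}" "finite B" "X1 = span B" "D = {d1 + x0 | d1 x0. d1 \<in> D1 \<and> x0 \<in> X0}"
      by blast
    obtain G where G: "finite G" "\<forall>(g, \<beta>)\<in>G. g \<in> dual_on T X1" "D1 = {z \<in> X1. \<forall>(g, \<beta>)\<in>G. g z \<le> \<beta>}"
      using H(4) unfolding convex_polyhedron_in_def by blast
    obtain P where P: "continuous_map T T P" "\<And>x. P x \<in> X1" "\<And>x. x - P x \<in> X0"
      using tvs_projection'[OF T H(1) H(2) H(7)] H(5) H(6) H(8) by (metis Int_commute)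
    have Puniq: "P (x1 + x0) = x1" if "x1 \<in> X1" "x0 \<in> X0" for x1 x0
    proof -
      have "x0 - ((x1 + x0) - P (x1 + x0)) \<in> X0" using H(1) P(3) that subspace_diff by blast
      moreover have "P (x1 + x0) - x1 \<in> X1" using H(3) P(2) that subspace_diff by blast
      moreover have "x0 - ((x1 + x0) - P (x1 + x0)) = P (x1 + x0) - x1" by simp
      ultimately show ?thesis using H(6) by (metis IntI eq_iff_diff_eq_0 singletonD)
    qed
    have Padd: "P (x + y) = P x + P y" for x y
    proof -
      have "x + y = (P x + P y) + ((x - P x) + (y - P y))" by simp
      then show ?thesis using Puniq[of "P x + P y" "(x - P x) + (y - P y)"] H(1,3) P
        by (metis subspace_add)
    qed
    have Pscale: "P (c *\<^sub>R x) = c *\<^sub>R P x" for c x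
    proof -
      have "c *\<^sub>R x = c *\<^sub>R P x + c *\<^sub>R (x - P x)" by (simp add: algebra_simps)
      then show ?thesis using Puniq[of "c *\<^sub>R P x" "c *\<^sub>R (x - P x)"] H(1,3) P
        by (metis subspace_scale)
    qed
    have PX1: "continuous_map T (subtopology T X1) P"
      using P(1,2) by (simp add: continuous_map_into_subtopology image_subset_iff ts)
    define F where "F = (\<lambda>(g, \<beta>). (g \<circ> P, \<beta>)) ` G"
    have memF: "(\<forall>(f, \<alpha>)\<in>F. f z \<le> \<alpha>) \<longleftrightarrow> (\<forall>(g, \<beta>)\<in>G. g (P z) \<le> \<beta>)" for z
      unfolding F_def by auto
    have dualF: "\<forall>(f, \<alpha>)\<in>F. f \<in> dual_on T UNIV"
    proof -
      have "g \<circ> P \<in> dual_on T UNIV" if "g \<in> dual_on T X1" for g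
      proof -
        have lg: "linear_functional_on X1 g" "continuous_map (subtopology T X1) euclideanreal g"
          using that by (auto simp: dual_on_def)
        have "linear_functional_on UNIV (g \<circ> P)"
          using lg(1) P(2) unfolding linear_functional_on_def by (simp add: Padd Pscale)
        moreover have "continuous_map (subtopology T UNIV) euclideanreal (g \<circ> P)"
          using continuous_map_compose[OF PX1 lg(2)] by simp
        ultimately show ?thesis by (simp add: dual_on_def)
      qed
      then show ?thesis using G(2) unfolding F_def by auto
    qed
    have "D = {z \<in> UNIV. \<forall>(f, \<alpha>)\<in>F. f z \<le> \<alpha>}"
    proof (intro set_eqI iffI)
      fix x assume "x \<in> D"
      then obtain d1 x0 where d: "d1 \<in> D1" "x0 \<in> X0" "x = d1 + x0" using H(9) by blast
      have "P x = d1" using Puniq d G(3) by auto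
      then show "x \<in> {z \<in> UNIV. \<forall>(f, \<alpha>)\<in>F. f z \<le> \<alpha>}" using d(1) G(3) memF by auto
    next
      fix x assume "x \<in> {z \<in> UNIV. \<forall>(f, \<alpha>)\<in>F. f z \<le> \<alpha>}"
      then have "P x \<in> D1" using memF P(2) G(3) by auto
      moreover have "x = P x + (x - P x)" by simp
      ultimately show "x \<in> D" using H(9) P(3) by blast
    qed
    then show "convex_polyhedron T D"
      unfolding convex_polyhedron_in_def using dualF F_def G(1) by blast
  qed
qed

end
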